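(* Let $n\geq2$, $p\in\mathbb{N}$, $s\in[p]$ and $t_0\in[n-1]$. Let $\Sigma_1,\Sigma_2\in\mathbb{R}^{p\times p}$ be symmetric positive definite and $\sigma^2=\|\Sigma_1\|_{\mathrm{op}}\vee\|\Sigma_2\|_{\mathrm{op}}$. Let $\Delta=\min(t_0,n-t_0)$ and $\gamma=s\log(ep/s)\vee\log\log(8n)$. Suppose that for some constant $c>0$, $$\Delta\Big\{\Big(\frac{\lambda^s_{\max}(\Sigma_1-\Sigma_2)}{\sigma^2-\lambda^s_{\max}(\Sigma_1-\Sigma_2)}\Big)\wedge\Big(\frac{\lambda^s_{\max}(\Sigma_1-\Sigma_2)}{\sigma^2-\lambda^s_{\max}(\Sigma_1-\Sigma_2)}\Big)^2\Big\}\geq c\gamma.$$ Then $$\sup_{v\in S^{p-1}_s}\ \frac{v^\top\Sigma_1v}{v^\top\Sigma_2v}\vee\frac{v^\top\Sigma_2v}{v^\top\Sigma_1v}\geq 1+c\frac{\gamma}{\Delta}\vee\sqrt{c\frac{\gamma}{\Delta}}.$$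
   Context: $S^{p-1}_s=\{v\in\mathbb{R}^p:\|v\|_2=1,\ \|v\|_0\leq s\}$, and for symmetric $A$, $\lambda^s_{\max}(A)=\sup_{v\in S^{p-1}_s}|v^\top Av|$. $\log$ is the natural logarithm. *)

theory Defs
  imports "HOL-Analysis.Analysis"
begin

definition sparse_sphere :: "nat \<Rightarrow> (real ^ 'p) set" where
  "sparse_sphere s = {v. norm v = 1 \<and> card {i. v $ i \<noteq> 0} \<le> s}"

definition lambda_s_max :: "nat \<Rightarrow> real ^ 'p ^ 'p \<Rightarrow> real" where
  "lambda_s_max s A = (SUP v \<in> sparse_sphere s. \<bar>v \<bullet> (A *v v)\<bar>)"

definition op_norm :: "real ^ 'p ^ 'p \<Rightarrow> real" where
  "op_norm A = onorm (\<lambda>x. A *v x)"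

definition sym_posdef :: "real ^ 'p ^ 'p \<Rightarrow> bool" where
  "sym_posdef A \<longleftrightarrow> transpose A = A \<and> (\<forall>x. x \<noteq> 0 \<longrightarrow> x \<bullet> (A *v x) > 0)"

end

theory Submission
  imports Defs
begin

lemma quad_le_op: "norm v = 1 \<Longrightarrow> v \<bullet> ((A::real^'n^'n) *v v) \<le> op_norm A"
proof -
  assume h: "norm v = 1"
  have "v \<bullet> (A *v v) \<le> norm v * norm (A *v v)" by (metis Cauchy_Schwarz_ineq2 abs_le_iff)
  also have "norm (A *v v) \<le> onorm ((*v) A) * norm v"
    by (rule onorm[OF matrix_vector_mul_bounded_linear])
  finally show ?thesis using h by (simp add: op_norm_def)
qed

lemma quad_lower:
  assumes "sym_posdef (A::real^'n^'n)"
  shows "\<exists>\<mu>>0. \<forall>v. norm v = 1 \<longrightarrow> \<mu> \<le> v \<bullet> (A *v v)"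
proof -
  have c: "continuous_on (sphere 0 1) (\<lambda>v. v \<bullet> (A *v v))"
    by (intro continuous_intros linear_continuous_on matrix_vector_mul_linear)
  have ne: "sphere (0::real^'n) 1 \<noteq> {}"
    by (metis NO_MATCH_def empty_iff mem_sphere_0 norm_axis_1)
  obtain x where x: "x \<in> sphere 0 1" "\<forall>y\<in>sphere 0 1. x \<bullet> (A *v x) \<le> y \<bullet> (A *v y)"
    using continuous_attains_inf[OF compact_sphere ne c] by blast
  have "x \<noteq> 0" using x(1) by auto
  then have "x \<bullet> (A *v x) > 0" using assms by (simp add: sym_posdef_def)
  then show ?thesis using x by (intro exI[of _ "x \<bullet> (A *v x)"]) auto
qed

theorem lemma10:
  fixes n s t0 :: nat and \<Sigma>1 \<Sigma>2 :: "real ^ 'p ^ 'p" and c :: real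
  assumes "n \<ge> 2"
    and "1 \<le> s" and "s \<le> CARD('p)"
    and "1 \<le> t0" and "t0 \<le> n - 1"
    and "sym_posdef \<Sigma>1" and "sym_posdef \<Sigma>2"
    and "c > 0"
  defines "\<Delta> \<equiv> real (min t0 (n - t0))"
    and "\<gamma> \<equiv> max (real s * ln (exp 1 * real CARD('p) / real s)) (ln (ln (8 * real n)))"
    and "r \<equiv> lambda_s_max s (\<Sigma>1 - \<Sigma>2) / (max (op_norm \<Sigma>1) (op_norm \<Sigma>2) - lambda_s_max s (\<Sigma>1 - \<Sigma>2))"
  assumes "\<Delta> * min r (r ^ 2) \<ge> c * \<gamma>"
  shows "(SUP v \<in> (sparse_sphere s :: (real ^ 'p) set).
            max ((v \<bullet> (\<Sigma>1 *v v)) / (v \<bullet> (\<Sigma>2 *v v))) ((v \<bullet> (\<Sigma>2 *v v)) / (v \<bullet> (\<Sigma>1 *v v))))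
         \<ge> 1 + max (c * \<gamma> / \<Delta>) (sqrt (c * \<gamma> / \<Delta>))"
proof -
  define a where "a v = v \<bullet> (\<Sigma>1 *v v)" for v :: "real^'p"
  define b where "b v = v \<bullet> (\<Sigma>2 *v v)" for v :: "real^'p"
  define R where "R v = max (a v / b v) (b v / a v)" for v
  define SS where "SS = (sparse_sphere s :: (real ^ 'p) set)"
  define \<sigma> where "\<sigma> = max (op_norm \<Sigma>1) (op_norm \<Sigma>2)"
  define L where "L = lambda_s_max s (\<Sigma>1 - \<Sigma>2)"
  define S where "S = (SUP v\<in>SS. R v)"
  obtain k :: 'p where True by auto
  have eSS: "axis k 1 \<in> SS"
  proof -
    have "{i. axis k (1::real) $ i \<noteq> 0} = {k}" by (auto simp: axis_def)
    then show ?thesis using assms(2) by (simp add: SS_def sparse_sphere_def norm_axis_1)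
  qed
  have ne: "SS \<noteq> {}" using eSS by auto
  have nv: "norm v = 1" if "v \<in> SS" for v using that by (simp add: SS_def sparse_sphere_def)
  have apos: "a v > 0" if "v \<in> SS" for v
    using nv[OF that] assms(6) unfolding a_def sym_posdef_def by (metis norm_zero zero_neq_one)
  have bpos: "b v > 0" if "v \<in> SS" for v
    using nv[OF that] assms(7) unfolding b_def sym_posdef_def by (metis norm_zero zero_neq_one)
  have ale: "a v \<le> \<sigma>" if "v \<in> SS" for v
    using quad_le_op[OF nv[OF that], of \<Sigma>1] unfolding a_def \<sigma>_def by linarith
  have ble: "b v \<le> \<sigma>" if "v \<in> SS" for v
    using quad_le_op[OF nv[OF that], of \<Sigma>2] unfolding b_def \<sigma>_def by linarith
  obtain \<mu>1 where m1: "\<mu>1 > 0" "\<And>v. norm v = 1 \<Longrightarrow> \<mu>1 \<le> a v"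
    using quad_lower[OF assms(6)] unfolding a_def by blast
  obtain \<mu>2 where m2: "\<mu>2 > 0" "\<And>v. norm v = 1 \<Longrightarrow> \<mu>2 \<le> b v"
    using quad_lower[OF assms(7)] unfolding b_def by blast
  have Rb: "R v \<le> \<sigma> / \<mu>2 + \<sigma> / \<mu>1" if "v \<in> SS" for v
  proof -
    have "a v / b v \<le> \<sigma> / \<mu>2"
      using frac_le[of \<sigma> "a v" \<mu>2 "b v"] ale[OF that] apos[OF that] m2(1) m2(2)[OF nv[OF that]] by linarith
    moreover have "b v / a v \<le> \<sigma> / \<mu>1"
      using frac_le[of \<sigma> "b v" \<mu>1 "a v"] ble[OF that] bpos[OF that] m1(1) m1(2)[OF nv[OF that]] by linarith
    moreover have "\<sigma> / \<mu>1 \<ge> 0" "\<sigma> / \<mu>2 \<ge> 0" using ale[OF eSS] apos[OF eSS] m1 m2 by auto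
    ultimately show ?thesis unfolding R_def by linarith
  qed
  have bdd: "bdd_above (R ` SS)" using Rb by (intro bdd_aboveI2) 
  have RS: "R v \<le> S" if "v \<in> SS" for v unfolding S_def by (rule cSUP_upper[OF that bdd])
  have R1: "R v \<ge> 1" if "v \<in> SS" for v
  proof (cases "a v \<ge> b v")
    case True then show ?thesis using bpos[OF that] unfolding R_def by (simp add: le_max_iff_disj)
  next
    case False then show ?thesis using apos[OF that] unfolding R_def by (simp add: le_max_iff_disj)
  qed
  have S1: "S \<ge> 1" using R1[OF eSS] RS[OF eSS] by linarith
  have dif: "v \<bullet> ((\<Sigma>1 - \<Sigma>2) *v v) = a v - b v" for v
    by (simp add: a_def b_def matrix_vector_mult_diff_rdistrib inner_diff_right)
  have dbound: "\<bar>a v - b v\<bar> \<le> (S - 1) * \<sigma> / S" if "v \<in> SS" for v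
  proof (cases "a v \<ge> b v")
    case True
    have "a v / b v \<le> S" using RS[OF that] unfolding R_def by linarith
    then have "a v \<le> S * b v" using bpos[OF that] by (simp add: divide_le_eq)
    then have "S * (a v - b v) \<le> (S - 1) * a v" by (simp add: algebra_simps)
    also have "\<dots> \<le> (S - 1) * \<sigma>" using ale[OF that] S1 by (intro mult_left_mono) auto
    finally show ?thesis using True S1 by (simp add: le_divide_eq mult.commute)
  next
    case False
    have "b v / a v \<le> S" using RS[OF that] unfolding R_def by linarith
    then have "b v \<le> S * a v" using apos[OF that] by (simp add: divide_le_eq)
    then have "S * (b v - a v) \<le> (S - 1) * b v" by (simp add: algebra_simps)
    also have "\<dots> \<le> (S - 1) * \<sigma>" using ble[OF that] S1 by (intro mult_left_mono) auto
    finally show ?thesis using False S1 by (simp add: le_divide_eq mult.commute)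
  qed
  have LS: "L \<le> (S - 1) * \<sigma> / S"
    unfolding L_def lambda_s_max_def SS_def[symmetric] dif
    using ne dbound by (intro cSUP_least) auto
  have sig: "\<sigma> > 0" using ale[OF eSS] apos[OF eSS] by linarith
  have Dpos: "\<Delta> > 0" using assms(4,5) unfolding \<Delta>_def by auto
  have "exp 1 * real CARD('p) / real s \<ge> exp 1 * 1"
    using assms(2,3) by (simp add: le_divide_eq)
  then have "exp 1 * real CARD('p) / real s > 1"
    by (metis exp_gt_one less_le_trans mult.right_neutral zero_less_one)
  then have "ln (exp 1 * real CARD('p) / real s) > 0" by simp
  then have "real s * ln (exp 1 * real CARD('p) / real s) > 0" using assms(2) by simp
  then have gpos: "\<gamma> > 0" unfolding \<gamma>_def by linarith
  define x where "x = c * \<gamma> / \<Delta>"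
  have xpos: "x > 0" using gpos Dpos assms(8) by (simp add: x_def)
  have "min r (r^2) \<ge> x" using assms(12) Dpos by (simp add: x_def divide_le_eq mult.commute min_def split: if_splits)
  then have rx: "r \<ge> x" and r2: "r^2 \<ge> x" by auto
  have rpos: "r > 0" using rx xpos by linarith
  have rs: "r \<ge> sqrt x"
    using real_sqrt_le_mono[OF r2] rpos by simp
  have Lpos: "\<sigma> - L > 0"
  proof (rule ccontr)
    assume "\<not> \<sigma> - L > 0"
    then have "L \<ge> \<sigma>" by simp
    then have "L > 0" using sig by simp
    moreover have "r \<le> 0" using \<open>L \<ge> \<sigma>\<close> \<open>L > 0\<close> unfolding r_def L_def[symmetric] \<sigma>_def[symmetric]
      by (simp add: divide_nonneg_nonpos)
    ultimately show False using rpos by simp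
  qed
  have "L * S \<le> (S - 1) * \<sigma>" using LS S1 by (simp add: le_divide_eq)
  then have "\<sigma> \<le> S * (\<sigma> - L)" by (simp add: algebra_simps)
  then have "\<sigma> / (\<sigma> - L) \<le> S" using Lpos by (simp add: divide_le_eq)
  moreover have "\<sigma> / (\<sigma> - L) = 1 + r"
    unfolding r_def L_def[symmetric] \<sigma>_def[symmetric] using Lpos by (simp add: field_simps)
  ultimately have "S \<ge> 1 + r" by simp
  then show ?thesis using rx rs
    unfolding S_def SS_def R_def a_def b_def x_def[symmetric] by simp
qed

end
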